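(* For any $s>-1$ and any $\varepsilon>0$ there exists $\delta>0$ such that $$\int_0^{\delta}x\,J^{(s)}(x,x)\,dx<\varepsilon .$$
   Context: $J_s$ denotes the Bessel function of the first kind of order $s$; $\tilde J_s(x,y)=\frac14\int_0^1 J_s(\sqrt{tx})J_s(\sqrt{ty})\,dt$ is the Bessel kernel on $(0,+\infty)$. The modified Bessel kernel $J^{(s)}$ is the image of $\tilde J_s$ under the change of variable $y=4/x$: $$J^{(s)}(x_1,x_2)=\frac{4}{x_1x_2}\,\tilde J_s\!\left(\frac{4}{x_1},\frac{4}{x_2}\right),\qquad x_1,x_2>0.$$ *)

theory Defs
  imports "HOL-Analysis.Analysis"
begin

definition besselJ :: "real \<Rightarrow> real \<Rightarrow> real" where
  "besselJ s x = (\<Sum>m. (-1) ^ m / (fact m * Gamma (real m + s + 1)) * (x / 2) powr (2 * real m + s))"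

definition besselKernel :: "real \<Rightarrow> real \<Rightarrow> real \<Rightarrow> real" where
  "besselKernel s x y = (1/4) * integral {0..1} (\<lambda>t. besselJ s (sqrt (t * x)) * besselJ s (sqrt (t * y)))"

definition modBesselKernel :: "real \<Rightarrow> real \<Rightarrow> real \<Rightarrow> real" where
  "modBesselKernel s x1 x2 = 4 / (x1 * x2) * besselKernel s (4 / x1) (4 / x2)"

end

theory Submission
  imports Defs
begin


definition bc :: "real \<Rightarrow> nat \<Rightarrow> real" where
  "bc s m = (-1)^m / (fact m * Gamma (real m + s + 1))"

definition bQ :: "real \<Rightarrow> real \<Rightarrow> real" where "bQ s u = (\<Sum>m. bc s m * u^m)"
definition bQ1 :: "real \<Rightarrow> real \<Rightarrow> real" where "bQ1 s u = (\<Sum>m. diffs (bc s) m * u^m)"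
definition bQ2 :: "real \<Rightarrow> real \<Rightarrow> real" where "bQ2 s u = (\<Sum>m. diffs (diffs (bc s)) m * u^m)"

lemma bc_Suc:
  assumes "s > -1"
  shows "bc s (Suc n) = - bc s n / ((real n + 1) * (real n + s + 1))"
proof -
  have z: "real n + s + 1 \<notin> \<int>\<^sub>\<le>\<^sub>0" using assms nonpos_Ints_nonpos by fastforce
  have g: "Gamma (real (Suc n) + s + 1) = (real n + s + 1) * Gamma (real n + s + 1)"
    using Gamma_plus1[OF z] by (simp add: algebra_simps)
  have "Gamma (real n + s + 1) > 0" using assms by simp
  moreover have "real n + s + 1 > 0" using assms by simp
  ultimately show ?thesis unfolding bc_def g by (simp add: field_simps)
qed

lemma bc_summable:
  assumes "s > -1"
  shows "summable (\<lambda>m. bc s m * u^m)"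
proof (rule summable_ratio_test[where c="1/2" and N="nat \<lceil>2*\<bar>u\<bar>\<rceil> + 1"])
  fix n assume n: "n \<ge> nat \<lceil>2*\<bar>u\<bar>\<rceil> + 1"
  have n1: "real n \<ge> 1" using n by simp
  have n2: "real n + 1 \<ge> 2*\<bar>u\<bar>" using n by linarith
  have p: "real n + s + 1 \<ge> real n" using assms by simp
  have den: "(real n + 1) * (real n + s + 1) \<ge> 2*\<bar>u\<bar>"
  proof -
    have "(real n + 1) * (real n + s + 1) \<ge> (real n + 1) * 1"
      using n1 p by (intro mult_left_mono) linarith+
    thus ?thesis using n2 by (simp only: mult_1_right)
  qed
  have pos: "(real n + 1) * (real n + s + 1) > 0" using n1 p by simp
  have "norm (bc s (Suc n) * u ^ Suc n) = \<bar>bc s n * u^n\<bar> * (\<bar>u\<bar> / ((real n + 1) * (real n + s + 1)))"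
    using pos by (simp add: bc_Suc[OF assms] abs_mult abs_divide field_simps)
  also have "\<dots> \<le> \<bar>bc s n * u^n\<bar> * (1/2)"
    using den pos by (intro mult_left_mono) (auto simp: field_simps)
  finally show "norm (bc s (Suc n) * u ^ Suc n) \<le> 1/2 * norm (bc s n * u^n)" by simp
qed simp

lemma bc_summable1: "s > -1 \<Longrightarrow> summable (\<lambda>m. diffs (bc s) m * u^m)"
  by (rule termdiff_converges_all) (rule bc_summable)

lemma bc_summable2: "s > -1 \<Longrightarrow> summable (\<lambda>m. diffs (diffs (bc s)) m * u^m)"
  by (rule termdiff_converges_all) (rule bc_summable1)

lemma bQ_deriv: "s > -1 \<Longrightarrow> (bQ s has_real_derivative bQ1 s u) (at u)"
  unfolding bQ_def[abs_def] bQ1_def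
  by (rule termdiffs_strong_converges_everywhere) (rule bc_summable)

lemma bQ1_deriv: "s > -1 \<Longrightarrow> (bQ1 s has_real_derivative bQ2 s u) (at u)"
  unfolding bQ1_def[abs_def] bQ2_def
  by (rule termdiffs_strong_converges_everywhere) (rule bc_summable1)

lemma bQ_ode:
  assumes "s > -1"
  shows "u * bQ2 s u + (s+1) * bQ1 s u + bQ s u = 0"
proof -
  define b where "b n = real n * (real n + 1) * bc s (Suc n) * u^n" for n
  have "(\<lambda>n. b (Suc n)) sums (u * bQ2 s u)"
  proof -
    have "(\<lambda>n. u * (diffs (diffs (bc s)) n * u^n)) sums (u * bQ2 s u)"
      unfolding bQ2_def by (intro sums_mult summable_sums bc_summable2 assms)
    moreover have "u * (diffs (diffs (bc s)) n * u^n) = b (Suc n)" for n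
      by (simp add: b_def diffs_def algebra_simps)
    ultimately show ?thesis by simp
  qed
  hence "b sums (u * bQ2 s u + b 0)" by (simp only: sums_Suc_iff)
  hence b: "b sums (u * bQ2 s u)" by (simp add: b_def)
  have q1: "(\<lambda>n. (s+1) * (diffs (bc s) n * u^n)) sums ((s+1) * bQ1 s u)"
    unfolding bQ1_def by (intro sums_mult summable_sums bc_summable1 assms)
  have q: "(\<lambda>n. bc s n * u^n) sums (bQ s u)"
    unfolding bQ_def by (intro summable_sums bc_summable assms)
  have "(\<lambda>n. b n + (s+1) * (diffs (bc s) n * u^n) + bc s n * u^n) sums
        (u * bQ2 s u + (s+1) * bQ1 s u + bQ s u)"
    by (intro sums_add b q1 q)
  moreover have "b n + (s+1) * (diffs (bc s) n * u^n) + bc s n * u^n = 0" for n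
  proof -
    have "real n + s + 1 > 0" using assms by simp
    hence d: "(real n + 1) * (real n + s + 1) \<noteq> 0" by simp
    have e: "bc s (Suc n) * ((real n + 1) * (real n + s + 1)) = - bc s n"
      using d by (simp add: bc_Suc[OF assms])
    have "b n + (s+1) * (diffs (bc s) n * u^n) + bc s n * u^n
       = (bc s (Suc n) * ((real n + 1) * (real n + s + 1)) + bc s n) * u^n"
      by (simp add: b_def diffs_def algebra_simps)
    thus ?thesis using e by simp
  qed
  ultimately show ?thesis using sums_unique sums_0 by fastforce
qed



lemma energy_alg:
  fixes P u Q Q1 Q2 s :: real
  assumes u: "u > 0" and ode: "u * Q2 + (s+1) * Q1 + Q = 0"
  shows "((s+1/2) * (P / u)) * (u * Q1^2 + 2*((2 * s+1)/4)*Q*Q1 + (1 + ((2 * s+1)/8)/u)*Q^2)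
     + (Q1^2 + u*(2*Q1*Q2) + 2*((2 * s+1)/4)*(Q1*Q1 + Q*Q2) + (-((2 * s+1)/8)/u^2)*Q^2 + (1 + ((2 * s+1)/8)/u)*(2*Q*Q1)) * P
   = - ((1 - 4 * s^2)/16) * P * Q^2 / u^2"
proof -
  have Q2: "Q2 = - ((s+1) * Q1 + Q) / u" using ode u by (simp add: field_simps)
  show ?thesis unfolding Q2 using u by (simp add: field_simps power2_eq_square)
qed


definition bE :: "real \<Rightarrow> real \<Rightarrow> real" where
  "bE s u = u powr (s+1/2) * (u * bQ1 s u^2 + 2*((2 * s+1)/4)*bQ s u*bQ1 s u + (1 + ((2 * s+1)/8)/u)*bQ s u^2)"

lemma bE_deriv:
  assumes s: "s > -1" and u: "u > 0"
  shows "(bE s has_real_derivative (- ((1 - 4 * s^2)/16) * u powr (s+1/2) * bQ s u^2 / u^2)) (at u)"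
proof -
  note dQ = bQ_deriv[OF s] and dQ1 = bQ1_deriv[OF s]
  have dP: "((\<lambda>u. u powr (s+1/2)) has_real_derivative ((s+1/2) * (u powr (s+1/2) / u))) (at u)"
  proof -
    have eq: "u powr (s + 1/2 - 1) = u powr (s+1/2) / u" using u by (subst powr_diff) auto
    show ?thesis using has_real_derivative_powr[OF u, of "s+1/2"] unfolding eq by simp
  qed
  have dI: "((\<lambda>u. u * bQ1 s u^2 + 2*((2 * s+1)/4)*bQ s u*bQ1 s u + (1 + ((2 * s+1)/8)/u)*bQ s u^2)
     has_real_derivative (bQ1 s u^2 + u*(2*bQ1 s u*bQ2 s u) + 2*((2 * s+1)/4)*(bQ1 s u*bQ1 s u + bQ s u*bQ2 s u)
        + (-((2 * s+1)/8)/u^2)*bQ s u^2 + (1 + ((2 * s+1)/8)/u)*(2*bQ s u*bQ1 s u))) (at u)"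
    using u by (auto intro!: derivative_eq_intros dQ dQ1 simp: field_simps power2_eq_square)
  have "(bE s has_real_derivative ((s+1/2) * (u powr (s+1/2) / u)) * (u * bQ1 s u^2 + 2*((2 * s+1)/4)*bQ s u*bQ1 s u + (1 + ((2 * s+1)/8)/u)*bQ s u^2)
     + (bQ1 s u^2 + u*(2*bQ1 s u*bQ2 s u) + 2*((2 * s+1)/4)*(bQ1 s u*bQ1 s u + bQ s u*bQ2 s u)
        + (-((2 * s+1)/8)/u^2)*bQ s u^2 + (1 + ((2 * s+1)/8)/u)*(2*bQ s u*bQ1 s u)) * u powr (s+1/2)) (at u)"
    unfolding bE_def[abs_def] by (rule DERIV_mult[OF dP dI])
  thus ?thesis by (simp only: energy_alg[OF u bQ_ode[OF s]])
qed



lemma bE_lower: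
  assumes s: "s > -1" and u: "u > 0" and uc: "2 * \<bar>(1 - 4 * s^2)/16\<bar> \<le> u"
  shows "u powr (s+1/2) * bQ s u^2 \<le> 2 * bE s u"
proof -
  define P where "P = u powr (s+1/2)"
  define Q where "Q = bQ s u"
  define Q1 where "Q1 = bQ1 s u"
  define c0 where "c0 = (1 - 4 * s^2)/16"
  have P0: "P \<ge> 0" unfolding P_def by simp
  have eq: "bE s u = P * (u * (Q1 + ((2 * s+1)/4) * Q / u)^2 + (1 + c0/u) * Q^2)"
    unfolding bE_def P_def Q_def Q1_def c0_def using u
    by (simp add: field_simps power2_eq_square)
  have "\<bar>c0/u\<bar> \<le> 1/2" using uc u unfolding c0_def by (simp add: abs_divide field_simps)
  hence h: "1 + c0/u \<ge> 1/2" by linarith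
  have "(1/2) * Q^2 \<le> (1 + c0/u) * Q^2" using h by (intro mult_right_mono) auto
  also have "\<dots> \<le> u * (Q1 + ((2 * s+1)/4) * Q / u)^2 + (1 + c0/u) * Q^2" using u by simp
  finally have "P * ((1/2) * Q^2) \<le> bE s u" unfolding eq using P0 by (intro mult_left_mono) auto
  thus ?thesis unfolding P_def Q_def by simp
qed

lemma bQ_cont: "s > -1 \<Longrightarrow> continuous_on A (bQ s)"
  by (meson DERIV_isCont bQ_deriv continuous_at_imp_continuous_on)

lemma bE_large:
  assumes s: "s > -1"
  shows "\<exists>M u0. u0 \<ge> 1 \<and> (\<forall>u\<ge>u0. u powr (s+1/2) * bQ s u^2 \<le> M)"
proof -
  define c0 where "c0 = (1 - 4 * s^2)/16"
  define D where "D = 2 * \<bar>c0\<bar>"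
  define u0 where "u0 = max 1 D"
  define G where "G u = bE s u * exp (D/u)" for u
  have dG: "(G has_real_derivative (- c0 * u powr (s+1/2) * bQ s u^2 / u^2) * exp (D/u)
        + bE s u * (exp (D/u) * (- D / u^2))) (at u)" if "u > 0" for u
  proof -
    have "((\<lambda>u. exp (D/u)) has_real_derivative (exp (D/u) * (- D / u^2))) (at u)"
      using that by (auto intro!: derivative_eq_intros simp: field_simps power2_eq_square)
    from DERIV_mult[OF bE_deriv[OF s that] this] show ?thesis
      unfolding G_def[abs_def] c0_def by (simp add: mult_ac)
  qed
  have Gle: "G u \<le> G u0" if "u \<ge> u0" for u
  proof (rule DERIV_nonpos_imp_decreasing_open[OF that])
    fix x assume x: "u0 < x" "x < u"
    hence xpos: "x > 0" and xD: "D \<le> x" unfolding u0_def by auto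
    have low: "x powr (s+1/2) * bQ s x^2 \<le> 2 * bE s x"
      using bE_lower[OF s xpos] xD unfolding D_def c0_def by simp
    have "- c0 * x powr (s+1/2) * bQ s x^2 / x^2 \<le> \<bar>c0\<bar> * (x powr (s+1/2) * bQ s x^2) / x^2"
    proof (intro divide_right_mono)
      have "0 \<le> x powr (s+1/2) * bQ s x^2" by simp
      moreover have "- c0 \<le> \<bar>c0\<bar>" by simp
      ultimately have "- c0 * (x powr (s+1/2) * bQ s x^2) \<le> \<bar>c0\<bar> * (x powr (s+1/2) * bQ s x^2)"
        using mult_right_mono by blast
      thus "- c0 * x powr (s+1/2) * bQ s x^2 \<le> \<bar>c0\<bar> * (x powr (s+1/2) * bQ s x^2)"
        by (simp only: mult.assoc)
    qed simp
    also have "\<dots> \<le> \<bar>c0\<bar> * (2 * bE s x) / x^2"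
      by (intro divide_right_mono mult_left_mono low) auto
    also have "\<dots> = D * bE s x / x^2" unfolding D_def by simp
    finally have "- c0 * x powr (s+1/2) * bQ s x^2 / x^2 - D * bE s x / x^2 \<le> 0" by simp
    hence "(- c0 * x powr (s+1/2) * bQ s x^2 / x^2 - D * bE s x / x^2) * exp (D/x) \<le> 0"
      by (simp add: mult_nonpos_nonneg)
    moreover have "(- c0 * x powr (s+1/2) * bQ s x^2 / x^2) * exp (D/x)
        + bE s x * (exp (D/x) * (- D / x^2)) = (- c0 * x powr (s+1/2) * bQ s x^2 / x^2 - D * bE s x / x^2) * exp (D/x)"
      by (simp add: algebra_simps)
    ultimately show "\<exists>y. (G has_real_derivative y) (at x) \<and> y \<le> 0"
      using dG[OF xpos] by auto
  next
    have "\<forall>x\<in>{u0..u}. isCont G x"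
    proof
      fix x assume "x \<in> {u0..u}"
      hence "x > 0" unfolding u0_def by auto
      thus "isCont G x" using dG DERIV_isCont by blast
    qed
    thus "continuous_on {u0..u} G" by (simp add: continuous_at_imp_continuous_on)
  qed
  show ?thesis
  proof (intro exI conjI allI impI)
    show "u0 \<ge> 1" unfolding u0_def by simp
    fix u assume u: "u \<ge> u0"
    hence upos: "u > 0" and uD: "D \<le> u" unfolding u0_def by auto
    have low: "u powr (s+1/2) * bQ s u^2 \<le> 2 * bE s u"
      using bE_lower[OF s upos] uD unfolding D_def c0_def by simp
    have "0 \<le> u powr (s+1/2) * bQ s u^2" by simp
    hence E0: "bE s u \<ge> 0" using low by linarith
    have "D/u \<ge> 0" unfolding D_def using upos by simp
    hence "exp (D/u) \<ge> 1" by simp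
    hence "bE s u \<le> G u" unfolding G_def using E0 by (metis mult_le_cancel_left1 not_le order_trans)
    also have "\<dots> \<le> G u0" using Gle[OF u] .
    finally show "u powr (s+1/2) * bQ s u^2 \<le> 2 * G u0" using low by linarith
  qed
qed



lemma Icc_insert: "(R::real) \<ge> 0 \<Longrightarrow> {0..R} = insert 0 {0<..R}"
  by auto

lemma integrable_dom:
  fixes f g :: "real \<Rightarrow> real"
  assumes c: "continuous_on {0<..R} f" and g: "g integrable_on {0..R}"
    and b: "\<And>x. x \<in> {0<..R} \<Longrightarrow> \<bar>f x\<bar> \<le> g x" and R: "R \<ge> 0"
  shows "f integrable_on {0..R}"
proof -
  have g': "g integrable_on {0<..R}" using g unfolding Icc_insert[OF R] integrable_on_insert_iff .
  have "f integrable_on {0<..R}"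
    by (rule measurable_bounded_by_integrable_imp_integrable_real[OF
          continuous_imp_measurable_on_sets_lebesgue[OF c] g' b]) auto
  thus ?thesis unfolding Icc_insert[OF R] integrable_on_insert_iff .
qed

lemma image_scale_Icc:
  assumes "x > (0::real)"
  shows "(\<lambda>t. x * t) ` {0..1/x} = {0..1}"
proof
  show "(\<lambda>t. x * t) ` {0..1/x} \<subseteq> {0..1}" using assms by (auto simp: field_simps)
  show "{0..1} \<subseteq> (\<lambda>t. x * t) ` {0..1/x}"
  proof
    fix y :: real assume y: "y \<in> {0..1}"
    have "y / x \<in> {0..1/x}" using y assms by (auto simp: field_simps)
    moreover have "y = x * (y / x)" using assms by simp
    ultimately show "y \<in> (\<lambda>t. x * t) ` {0..1/x}" by blast
  qed
qed

lemma integral_scale: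
  fixes F :: "real \<Rightarrow> real"
  assumes x: "x > 0" and F: "F integrable_on {0..1/x}"
  shows "integral {0..1} (\<lambda>t. F (t / x)) = x * integral {0..1/x} F"
proof -
  have "(F has_integral integral {0..1/x} F) (cbox 0 (1/x))" using integrable_integral[OF F] by simp
  from has_integral_affinity[OF this, of "1/x" 0]
  have "((\<lambda>t. F ((1/x) * t)) has_integral (x * integral {0..1/x} F)) ((\<lambda>t. x * t) ` {0..1/x})"
    using x by simp
  hence "((\<lambda>t. F (t / x)) has_integral (x * integral {0..1/x} F)) {0..1}"
    unfolding image_scale_Icc[OF x] by (simp add: field_simps)
  thus ?thesis by (rule integral_unique)
qed



definition bF :: "real \<Rightarrow> real \<Rightarrow> real" where "bF s v = v powr s * bQ s v ^ 2"

lemma bF_nonneg: "bF s v \<ge> 0" unfolding bF_def by simp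

lemma bF_bound:
  assumes s: "s > -1"
  shows "\<exists>A \<sigma>. -1 < \<sigma> \<and> \<sigma> \<le> -1/2 \<and> A \<ge> 0 \<and> (\<forall>v\<ge>0. bF s v \<le> A * (v powr (-1/2) + v powr \<sigma>))"
proof -
  obtain M u0 where u0: "u0 \<ge> 1" and M: "\<And>u. u \<ge> u0 \<Longrightarrow> u powr (s+1/2) * bQ s u^2 \<le> M"
    using bE_large[OF s] by blast
  have M0: "M \<ge> 0" using M[of u0] by (metis order_trans zero_le_mult_iff powr_ge_zero zero_le_power2 order_refl)
  have "bounded (bQ s ` {0..u0})"
    by (intro compact_imp_bounded compact_continuous_image bQ_cont[OF s]) auto
  then obtain B where B0: "\<forall>y\<in>bQ s ` {0..u0}. norm y \<le> B"
    unfolding bounded_iff by blast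
  have B: "\<bar>bQ s v\<bar> \<le> B" if "v \<in> {0..u0}" for v using B0 that by auto
  define \<sigma> where "\<sigma> = min s (-1/2)"
  define A where "A = max M (B^2 * u0 powr (s - \<sigma>))"
  have A0: "A \<ge> 0" unfolding A_def using M0 by simp
  show ?thesis
  proof (intro exI conjI allI impI)
    show "-1 < \<sigma>" "\<sigma> \<le> -1/2" unfolding \<sigma>_def using s by auto
    show "A \<ge> 0" by (rule A0)
    fix v :: real assume v: "v \<ge> 0"
    have r0: "A * (v powr (-1/2) + v powr \<sigma>) \<ge> 0" using A0 by simp
    show "bF s v \<le> A * (v powr (-1/2) + v powr \<sigma>)"
    proof (cases "v = 0")
      case True thus ?thesis using r0 by (simp add: bF_def)
    next
      case False
      hence vp: "v > 0" using v by simp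
      show ?thesis
      proof (cases "v \<ge> u0")
        case True
        have "bF s v = v powr (-1/2) * (v powr (s+1/2) * bQ s v^2)"
          unfolding bF_def by (simp add: powr_add[symmetric] mult.assoc[symmetric])
        also have "\<dots> \<le> v powr (-1/2) * M" by (intro mult_left_mono M True) simp
        also have "\<dots> \<le> v powr (-1/2) * A" unfolding A_def by (intro mult_left_mono) auto
        also have "\<dots> \<le> A * (v powr (-1/2) + v powr \<sigma>)" using A0 by (simp add: algebra_simps)
        finally show ?thesis .
      next
        case False
        hence vu: "v \<le> u0" by simp
        have Q: "bQ s v^2 \<le> B^2"
          using B[of v] v vu by (metis abs_ge_zero atLeastAtMost_iff power2_abs power_mono)
        have sig: "s - \<sigma> \<ge> 0" unfolding \<sigma>_def by simp
        have "v powr s = v powr \<sigma> * v powr (s - \<sigma>)" by (simp add: powr_add[symmetric])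
        also have "\<dots> \<le> v powr \<sigma> * u0 powr (s - \<sigma>)"
          by (intro mult_left_mono powr_mono2 sig vu v) simp
        finally have vs: "v powr s \<le> v powr \<sigma> * u0 powr (s - \<sigma>)" .
        have "bF s v \<le> (v powr \<sigma> * u0 powr (s - \<sigma>)) * B^2"
          unfolding bF_def by (intro mult_mono vs Q) auto
        also have "\<dots> = v powr \<sigma> * (B^2 * u0 powr (s - \<sigma>))" by simp
        also have "\<dots> \<le> v powr \<sigma> * A" unfolding A_def by (intro mult_left_mono) auto
        also have "\<dots> \<le> A * (v powr (-1/2) + v powr \<sigma>)" using A0 by (simp add: algebra_simps)
        finally show ?thesis .
      qed
    qed
  qed
qed

lemma besselJ_Q:
  assumes s: "s > -1" and r: "r \<ge> 0"
  shows "besselJ s r = (r/2) powr s * bQ s (r^2/4)"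
proof (cases "r = 0")
  case True thus ?thesis by (simp add: besselJ_def)
next
  case False
  hence rp: "r/2 > 0" using r by simp
  have t: "(-1) ^ m / (fact m * Gamma (real m + s + 1)) * (r / 2) powr (2 * real m + s)
      = (r/2) powr s * (bc s m * (r^2/4)^m)" for m
  proof -
    have "(r/2) powr (2 * real m + s) = (r/2) powr s * (r/2) powr (real (2*m))"
      by (simp add: powr_add[symmetric] add.commute)
    also have "(r/2) powr (real (2*m)) = (r/2)^(2*m)"
      using rp by (rule powr_realpow)
    also have "(r/2)^(2*m) = (r^2/4)^m"
      by (simp add: power_mult power_divide)
    finally show ?thesis unfolding bc_def by simp
  qed
  show ?thesis unfolding besselJ_def t bQ_def
    by (rule suminf_mult[OF bc_summable[OF s]])
qed

lemma kernel_eq: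
  assumes s: "s > -1" and x: "x > 0"
  shows "x * modBesselKernel s x x = (1/x) * integral {0..1} (\<lambda>t. bF s (t / x))"
proof -
  have pt: "besselJ s (sqrt (t * (4/x))) * besselJ s (sqrt (t * (4/x))) = bF s (t/x)"
    if t: "t \<in> {0..1}" for t
  proof -
    have tx: "t/x \<ge> 0" using t x by simp
    have sq: "sqrt (t * (4/x)) = 2 * sqrt (t/x)"
    proof -
      have "t * (4/x) = 4 * (t/x)" by simp
      hence "sqrt (t * (4/x)) = sqrt 4 * sqrt (t/x)" by (simp only: real_sqrt_mult)
      moreover have "sqrt (4::real) = 2" by (simp add: real_sqrt_eq_iff[symmetric])
      ultimately show ?thesis by simp
    qed
    have "besselJ s (sqrt (t * (4/x))) = sqrt (t/x) powr s * bQ s (t/x)"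
    proof -
      have "besselJ s (2 * sqrt (t/x)) = (2 * sqrt (t/x) / 2) powr s * bQ s ((2 * sqrt (t/x))^2/4)"
        by (rule besselJ_Q[OF s]) (simp add: tx)
      also have "(2 * sqrt (t/x))^2/4 = t/x" using tx by (simp add: power_mult_distrib)
      finally show ?thesis unfolding sq by simp
    qed
    moreover have "sqrt (t/x) powr s * sqrt (t/x) powr s = (t/x) powr s"
    proof -
      have "sqrt (t/x) powr s * sqrt (t/x) powr s = (sqrt (t/x) * sqrt (t/x)) powr s"
        by (rule powr_mult[symmetric])
      also have "sqrt (t/x) * sqrt (t/x) = t/x" using tx by (metis real_sqrt_mult_self abs_of_nonneg)
      finally show ?thesis .
    qed
    ultimately show ?thesis unfolding bF_def by (simp add: power2_eq_square algebra_simps)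
  qed
  have "x * modBesselKernel s x x = x * (4 / (x*x)) * (1/4) *
      integral {0..1} (\<lambda>t. besselJ s (sqrt (t * (4/x))) * besselJ s (sqrt (t * (4/x))))"
    unfolding modBesselKernel_def besselKernel_def by simp
  also have "integral {0..1} (\<lambda>t. besselJ s (sqrt (t * (4/x))) * besselJ s (sqrt (t * (4/x))))
      = integral {0..1} (\<lambda>t. bF s (t / x))"
    by (rule integral_cong) (rule pt)
  finally show ?thesis using x by (simp add: field_simps)
qed



lemma powr_int_bound:
  fixes a R :: real
  assumes "a > -1" "R \<ge> 0"
  shows "((\<lambda>x. x powr a) has_integral (R powr (a+1) / (a+1))) {0..R}"
  using has_integral_powr_from_0[OF assms] .

theorem mainTheorem4:
  fixes s \<epsilon> :: real
  assumes "s > -1" and "\<epsilon> > 0"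
  shows "\<exists>\<delta>>0. (\<lambda>x. x * modBesselKernel s x x) integrable_on {0..\<delta>} \<and>
               integral {0..\<delta>} (\<lambda>x. x * modBesselKernel s x x) < \<epsilon>"
proof -
  note s = assms(1)
  obtain A \<sigma> where sig1: "-1 < \<sigma>" and sig2: "\<sigma> \<le> -1/2" and A0: "A \<ge> 0"
    and bnd: "\<And>v. v \<ge> 0 \<Longrightarrow> bF s v \<le> A * (v powr (-1/2) + v powr \<sigma>)"
    using bF_bound[OF s] by blast
  define h where "h v = A * (v powr (-1/2) + v powr \<sigma>)" for v
  define \<Psi> where "\<Psi> R = integral {0..R} (bF s)" for R
  have hint: "(h has_integral A * (R powr (1/2) / (1/2) + R powr (\<sigma>+1) / (\<sigma>+1))) {0..R}"
    if R: "R \<ge> 0" for R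
  proof -
    have "((\<lambda>v. v powr (-1/2) + v powr \<sigma>) has_integral
        (R powr (-1/2+1) / (-1/2+1) + R powr (\<sigma>+1) / (\<sigma>+1))) {0..R}"
      by (intro has_integral_add powr_int_bound R sig1) simp
    from has_integral_mult_right[OF this, of A] show ?thesis unfolding h_def by simp
  qed
  have Fcont: "continuous_on {0<..R} (bF s)" for R
    unfolding bF_def by (intro continuous_intros bQ_cont[OF s]) auto
  have Fint: "bF s integrable_on {0..R}" if R: "R \<ge> 0" for R
  proof (rule integrable_dom[OF Fcont _ _ R])
    show "h integrable_on {0..R}" using hint[OF R] by blast
    fix v :: real assume "v \<in> {0<..R}"
    thus "\<bar>bF s v\<bar> \<le> h v" using bnd[of v] bF_nonneg[of s v] unfolding h_def by simp
  qed
  have Psi_le: "\<Psi> R \<le> A * (R powr (1/2) / (1/2) + R powr (\<sigma>+1) / (\<sigma>+1))" if R: "R \<ge> 0" for R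
    unfolding \<Psi>_def
    by (rule has_integral_le[OF integrable_integral[OF Fint[OF R]] hint[OF R]])
       (use bnd in \<open>auto simp: h_def\<close>)
  define K where "K = A * (2 + 1 / (\<sigma>+1))"
  have K0: "K \<ge> 0" unfolding K_def using A0 sig1 by simp
  have Psi_le2: "\<Psi> R \<le> K * R powr (1/2)" if R: "R \<ge> 1" for R
  proof -
    have "R powr (\<sigma>+1) \<le> R powr (1/2)" using R sig2 by (intro powr_mono) auto
    hence "R powr (\<sigma>+1) / (\<sigma>+1) \<le> R powr (1/2) / (\<sigma>+1)" using sig1 by (intro divide_right_mono) auto
    hence "A * (R powr (1/2) / (1/2) + R powr (\<sigma>+1) / (\<sigma>+1)) \<le> A * (R powr (1/2) / (1/2) + R powr (1/2) / (\<sigma>+1))"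
      using A0 by (intro mult_left_mono) auto
    also have "\<dots> = K * R powr (1/2)" unfolding K_def by (simp add: algebra_simps)
    finally show ?thesis using Psi_le[of R] R by simp
  qed
  define g where "g x = x * modBesselKernel s x x" for x
  have g_eq: "g x = \<Psi> (1/x)" if x: "x > 0" for x
  proof -
    have "g x = (1/x) * integral {0..1} (\<lambda>t. bF s (t / x))" unfolding g_def by (rule kernel_eq[OF s x])
    also have "\<dots> = (1/x) * (x * \<Psi> (1/x))"
      unfolding \<Psi>_def using x by (subst integral_scale[OF x Fint]) auto
    finally show ?thesis using x by simp
  qed
  have g_nonneg: "g x \<ge> 0" if "x > 0" for x
    unfolding g_eq[OF that] \<Psi>_def by (rule integral_nonneg[OF Fint]) (use that bF_nonneg in auto)
  have g_le: "g x \<le> K * x powr (-1/2)" if x: "x > 0" "x \<le> 1" for x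
  proof -
    have "g x \<le> K * (1/x) powr (1/2)" unfolding g_eq[OF x(1)] using x by (intro Psi_le2) simp
    also have "(1/x) powr (1/2) = x powr (-1/2)" using x by (simp add: powr_minus_divide powr_divide)
    finally show ?thesis .
  qed
  have Psi_cont: "isCont \<Psi> y" if y: "y > 0" for y
  proof -
    have "continuous_on {0..y+1} \<Psi>"
      unfolding \<Psi>_def by (rule indefinite_integral_continuous_1[OF Fint]) (use y in simp)
    moreover have "y \<in> interior {0..y+1}" using y by simp
    ultimately show ?thesis using continuous_on_interior by blast
  qed
  have g_cont: "continuous_on {0<..d} g" for d
  proof -
    have "continuous_on {0<..d} (\<lambda>x. \<Psi> (1/x))"
    proof (intro continuous_at_imp_continuous_on ballI)
      fix x :: real assume "x \<in> {0<..d}"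
      hence x: "x > 0" by simp
      have "isCont (\<lambda>x. 1/x) x" using x by (intro continuous_intros) simp
      moreover have "isCont \<Psi> (1/x)" using x by (intro Psi_cont) simp
      ultimately show "isCont (\<lambda>x. \<Psi> (1/x)) x" by (rule isCont_o2)
    qed
    thus ?thesis by (rule continuous_on_cong[THEN iffD1, rotated 2]) (auto simp: g_eq)
  qed
  define \<delta> where "\<delta> = min 1 ((\<epsilon> / (2*K+1))^2)"
  have d0: "\<delta> > 0" unfolding \<delta>_def using assms(2) K0 by simp
  have d1: "\<delta> \<le> 1" unfolding \<delta>_def by simp
  have kint: "((\<lambda>x. K * x powr (-1/2)) has_integral K * (\<delta> powr (1/2) / (1/2))) {0..\<delta>}"
    using has_integral_mult_right[OF powr_int_bound[of "-1/2" \<delta>], of K] d0 by simp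
  have gint: "g integrable_on {0..\<delta>}"
  proof (rule integrable_dom[OF g_cont _ _ less_imp_le[OF d0]])
    show "(\<lambda>x. K * x powr (-1/2)) integrable_on {0..\<delta>}" using kint by blast
    fix x assume "x \<in> {0<..\<delta>}"
    thus "\<bar>g x\<bar> \<le> K * x powr (-1/2)" using g_le[of x] g_nonneg[of x] d1 by simp
  qed
  have gI: "integral {0..\<delta>} g \<le> K * (\<delta> powr (1/2) / (1/2))"
  proof (rule has_integral_le[OF integrable_integral[OF gint] kint])
    fix x assume x: "x \<in> {0..\<delta>}"
    show "g x \<le> K * x powr (-1/2)"
    proof (cases "x = 0")
      case True thus ?thesis by (simp add: g_def modBesselKernel_def)
    next
      case False thus ?thesis using x d1 by (intro g_le) auto
    qed
  qed
  have "\<delta> powr (1/2) = sqrt \<delta>" using d0 by (simp add: powr_half_sqrt)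
  also have "sqrt \<delta> \<le> sqrt ((\<epsilon> / (2*K+1))^2)" unfolding \<delta>_def by (rule real_sqrt_le_mono) (rule min.cobounded2)
  also have "\<dots> = \<epsilon> / (2*K+1)" using assms(2) K0 by simp
  finally have sd: "\<delta> powr (1/2) \<le> \<epsilon> / (2*K+1)" .
  have "K * (\<delta> powr (1/2) / (1/2)) = 2 * K * \<delta> powr (1/2)" by simp
  also have "\<dots> \<le> 2 * K * (\<epsilon> / (2*K+1))" using sd K0 by (intro mult_left_mono) auto
  also have "\<dots> < \<epsilon>" using assms(2) K0 by (simp add: field_simps)
  finally have "integral {0..\<delta>} g < \<epsilon>" using gI by linarith
  thus ?thesis using gint d0 unfolding g_def[abs_def] by blast
qed

end
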